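(* Let $Y$ be a solid vector space and $(X,d)$ a cone metric space over $Y$. Then $(X,d)$ is complete if and only if every nested sequence $\overline U(x_1,r_1)\supseteq\overline U(x_2,r_2)\supseteq\cdots$ of closed balls in $X$ with $r_n\to0$ in $Y$ has nonempty intersection.
   Context: Vector space with convergence: a real vector space $Y$ with a relation $\to$ between sequences in $Y$ and points of $Y$ (uniqueness of limits not assumed) such that (C1) $x_n\to x$, $y_n\to y$ imply $x_n+y_n\to x+y$; (C2) $x_n\to x$, $\lambda\in\mathbb R$ imply $\lambda x_n\to\lambda x$; (C3) $\lambda_n\to\lambda$ in $\mathbb R$ imply $\lambda_n x\to\lambda x$. $A\subseteq Y$ is open if $x_n\to x\in A$ implies $x_n\in A$ for all but finitely many $n$; closed if $x_n\to x$, $x_n\in A$ $\forall n$ imply $x\in A$; $A^\circ$ is the union of all open subsets of $A$. A cone is a nonempty closed $K$ with $\lambda K\subseteq K$ ($\lambda\ge0$), $K+K\subseteq K$, $K\cap(-K)=\{0\}$; solid if $K\ne\{0\}$, $K^\circ\neq\emptyset$. A vector ordering is a partial order $\preceq$ with (V1) $x\preceq y\Rightarrow x+z\preceq y+z$; (V2) $\lambda\ge0$, $x\preceq y\Rightarrow\lambda x\preceq\lambda y$; (V3) $x_n\to x$, $y_n\to y$, $x_n\preceq y_n$ $\forall n\Rightarrow x\preceq y$. Solid vector space: positive cone $K=\{x:x\succeq 0\}$ solid, with $x\prec y$ iff $y-x\in K^\circ$. Cone metric space over $Y$: nonempty $X$ with $d\colon X\times X\to Y$, $d(x,y)\succeq0$,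 $d(x,y)=0$ iff $x=y$, $d(x,y)=d(y,x)$, $d(x,y)\preceq d(x,z)+d(z,y)$. $X$ carries the topology with basis $U(x,r)=\{y:d(y,x)\prec r\}$ ($r\succ0$), so $x_n\to x$ iff for each $c\succ0$, $d(x_n,x)\prec c$ for all but finitely many $n$. Closed ball $\overline U(x,r)=\{y:d(y,x)\preceq r\}$ for $r\succeq0$. Cauchy: for every $c\succ0$ there is $N$ with $d(x_n,x_m)\prec c$ for $n,m>N$; complete: every Cauchy sequence converges. *)

theory Defs
  imports Main "HOL-Analysis.Analysis"
begin

text \<open>Vector space with convergence: the convergence relation is an explicit parameter
  cv :: (nat => 'y) => 'y => bool on a real vector space 'y (limits need not be unique).\<close>

definition vs_conv :: "((nat \<Rightarrow> 'y::real_vector) \<Rightarrow> 'y \<Rightarrow> bool) \<Rightarrow> bool" where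
  "vs_conv cv \<longleftrightarrow>
     (\<forall>xs ys x y. cv xs x \<and> cv ys y \<longrightarrow> cv (\<lambda>n. xs n + ys n) (x + y)) \<and>
     (\<forall>xs x (l::real). cv xs x \<longrightarrow> cv (\<lambda>n. l *\<^sub>R xs n) (l *\<^sub>R x)) \<and>
     (\<forall>(ls::nat \<Rightarrow> real) l x. ls \<longlonglongrightarrow> l \<longrightarrow> cv (\<lambda>n. ls n *\<^sub>R x) (l *\<^sub>R x))"

definition cv_open :: "((nat \<Rightarrow> 'y) \<Rightarrow> 'y \<Rightarrow> bool) \<Rightarrow> 'y set \<Rightarrow> bool" where
  "cv_open cv A \<longleftrightarrow> (\<forall>xs x. cv xs x \<and> x \<in> A \<longrightarrow> (\<forall>\<^sub>F n in sequentially. xs n \<in> A))"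

definition cv_closed :: "((nat \<Rightarrow> 'y) \<Rightarrow> 'y \<Rightarrow> bool) \<Rightarrow> 'y set \<Rightarrow> bool" where
  "cv_closed cv A \<longleftrightarrow> (\<forall>xs x. cv xs x \<and> (\<forall>n. xs n \<in> A) \<longrightarrow> x \<in> A)"

definition cv_interior :: "((nat \<Rightarrow> 'y) \<Rightarrow> 'y \<Rightarrow> bool) \<Rightarrow> 'y set \<Rightarrow> 'y set" where
  "cv_interior cv A = \<Union>{U. U \<subseteq> A \<and> cv_open cv U}"

definition is_cone :: "((nat \<Rightarrow> 'y::real_vector) \<Rightarrow> 'y \<Rightarrow> bool) \<Rightarrow> 'y set \<Rightarrow> bool" where
  "is_cone cv K \<longleftrightarrow> K \<noteq> {} \<and> cv_closed cv K \<and>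
     (\<forall>(l::real) x. l \<ge> 0 \<and> x \<in> K \<longrightarrow> l *\<^sub>R x \<in> K) \<and>
     (\<forall>x y. x \<in> K \<and> y \<in> K \<longrightarrow> x + y \<in> K) \<and>
     K \<inter> uminus ` K = {0}"

definition solid_cone :: "((nat \<Rightarrow> 'y::real_vector) \<Rightarrow> 'y \<Rightarrow> bool) \<Rightarrow> 'y set \<Rightarrow> bool" where
  "solid_cone cv K \<longleftrightarrow> is_cone cv K \<and> K \<noteq> {0} \<and> cv_interior cv K \<noteq> {}"

definition vector_ordering ::
  "((nat \<Rightarrow> 'y::real_vector) \<Rightarrow> 'y \<Rightarrow> bool) \<Rightarrow> ('y \<Rightarrow> 'y \<Rightarrow> bool) \<Rightarrow> bool" where
  "vector_ordering cv le \<longleftrightarrow>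
     (\<forall>x. le x x) \<and> (\<forall>x y. le x y \<and> le y x \<longrightarrow> x = y) \<and>
     (\<forall>x y z. le x y \<and> le y z \<longrightarrow> le x z) \<and>
     (\<forall>x y z. le x y \<longrightarrow> le (x + z) (y + z)) \<and>
     (\<forall>(l::real) x y. l \<ge> 0 \<and> le x y \<longrightarrow> le (l *\<^sub>R x) (l *\<^sub>R y)) \<and>
     (\<forall>xs ys x y. cv xs x \<and> cv ys y \<and> (\<forall>n. le (xs n) (ys n)) \<longrightarrow> le x y)"

definition solid_vector_space ::
  "((nat \<Rightarrow> 'y::real_vector) \<Rightarrow> 'y \<Rightarrow> bool) \<Rightarrow> ('y \<Rightarrow> 'y \<Rightarrow> bool) \<Rightarrow> bool" where
  "solid_vector_space cv le \<longleftrightarrow> vs_conv cv \<and> vector_ordering cv le \<and> solid_cone cv {x. le 0 x}"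

definition sv_less ::
  "((nat \<Rightarrow> 'y::real_vector) \<Rightarrow> 'y \<Rightarrow> bool) \<Rightarrow> ('y \<Rightarrow> 'y \<Rightarrow> bool) \<Rightarrow> 'y \<Rightarrow> 'y \<Rightarrow> bool" where
  "sv_less cv le x y \<longleftrightarrow> y - x \<in> cv_interior cv {z. le 0 z}"

definition cone_metric :: "('y::real_vector \<Rightarrow> 'y \<Rightarrow> bool) \<Rightarrow> ('x \<Rightarrow> 'x \<Rightarrow> 'y) \<Rightarrow> bool" where
  "cone_metric le d \<longleftrightarrow>
     (\<forall>x y. le 0 (d x y)) \<and> (\<forall>x y. d x y = 0 \<longleftrightarrow> x = y) \<and>
     (\<forall>x y. d x y = d y x) \<and> (\<forall>x y z. le (d x y) (d x z + d z y))"

definition cm_tendsto ::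
  "((nat \<Rightarrow> 'y::real_vector) \<Rightarrow> 'y \<Rightarrow> bool) \<Rightarrow> ('y \<Rightarrow> 'y \<Rightarrow> bool) \<Rightarrow> ('x \<Rightarrow> 'x \<Rightarrow> 'y)
    \<Rightarrow> (nat \<Rightarrow> 'x) \<Rightarrow> 'x \<Rightarrow> bool" where
  "cm_tendsto cv le d s x \<longleftrightarrow>
     (\<forall>c. sv_less cv le 0 c \<longrightarrow> (\<forall>\<^sub>F n in sequentially. sv_less cv le (d (s n) x) c))"

definition cm_Cauchy ::
  "((nat \<Rightarrow> 'y::real_vector) \<Rightarrow> 'y \<Rightarrow> bool) \<Rightarrow> ('y \<Rightarrow> 'y \<Rightarrow> bool) \<Rightarrow> ('x \<Rightarrow> 'x \<Rightarrow> 'y)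
    \<Rightarrow> (nat \<Rightarrow> 'x) \<Rightarrow> bool" where
  "cm_Cauchy cv le d s \<longleftrightarrow>
     (\<forall>c. sv_less cv le 0 c \<longrightarrow> (\<exists>N. \<forall>n m. n > N \<and> m > N \<longrightarrow> sv_less cv le (d (s n) (s m)) c))"

definition cm_complete ::
  "((nat \<Rightarrow> 'y::real_vector) \<Rightarrow> 'y \<Rightarrow> bool) \<Rightarrow> ('y \<Rightarrow> 'y \<Rightarrow> bool) \<Rightarrow> ('x \<Rightarrow> 'x \<Rightarrow> 'y) \<Rightarrow> bool" where
  "cm_complete cv le d \<longleftrightarrow> (\<forall>s. cm_Cauchy cv le d s \<longrightarrow> (\<exists>x. cm_tendsto cv le d s x))"

definition cm_cball :: "('y \<Rightarrow> 'y \<Rightarrow> bool) \<Rightarrow> ('x \<Rightarrow> 'x \<Rightarrow> 'y) \<Rightarrow> 'x \<Rightarrow> 'y \<Rightarrow> 'x set" where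
  "cm_cball le d x r = {y. le (d y x) r}"

end

theory Submission
  imports Defs
begin

context
  fixes cv :: "(nat \<Rightarrow> 'y::real_vector) \<Rightarrow> 'y \<Rightarrow> bool"
    and le :: "'y \<Rightarrow> 'y \<Rightarrow> bool"
  assumes S: "solid_vector_space cv le"
begin

lemma C1: "cv xs x \<Longrightarrow> cv ys y \<Longrightarrow> cv (\<lambda>n. xs n + ys n) (x+y)"
  using S unfolding solid_vector_space_def vs_conv_def by blast
lemma C2: "cv xs x \<Longrightarrow> cv (\<lambda>n. l *\<^sub>R xs n) (l *\<^sub>R x)"
  using S unfolding solid_vector_space_def vs_conv_def by blast
lemma C3: "ls \<longlonglongrightarrow> l \<Longrightarrow> cv (\<lambda>n. ls n *\<^sub>R x) (l *\<^sub>R x)"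
  using S unfolding solid_vector_space_def vs_conv_def by blast
lemma cst: "cv (\<lambda>n. x) x"
  using C3[of "\<lambda>n. 1" 1 x] by simp

lemma Ltrans: "le x y \<Longrightarrow> le y z \<Longrightarrow> le x z"
  using S unfolding solid_vector_space_def vector_ordering_def by blast
lemma Ladd: "le x y \<Longrightarrow> le (x+z) (y+z)"
  using S unfolding solid_vector_space_def vector_ordering_def by blast
lemma Lsc: "l \<ge> 0 \<Longrightarrow> le x y \<Longrightarrow> le (l *\<^sub>R x) (l *\<^sub>R y)"
  using S unfolding solid_vector_space_def vector_ordering_def by blast
lemma V3: "cv xs x \<Longrightarrow> cv ys y \<Longrightarrow> (\<forall>n. le (xs n) (ys n)) \<Longrightarrow> le x y"
  using S unfolding solid_vector_space_def vector_ordering_def by blast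

lemma add_mono': "le a b \<Longrightarrow> le c e \<Longrightarrow> le (a+c) (b+e)"
proof -
  assume "le a b" "le c e"
  have "le (a+c) (b+c)" using Ladd[OF \<open>le a b\<close>] .
  moreover have "le (c+b) (e+b)" using Ladd[OF \<open>le c e\<close>] .
  ultimately show ?thesis using Ltrans by (simp add: add.commute)
qed

lemma le_iff: "le x y \<longleftrightarrow> le 0 (y - x)"
proof
  assume "le x y" then show "le 0 (y - x)" using Ladd[of x y "-x"] by simp
next
  assume "le 0 (y - x)" then show "le x y" using Ladd[of 0 "y-x" x] by simp
qed

lemma int_sub: "sv_less cv le x y \<Longrightarrow> le x y"
  unfolding sv_less_def cv_interior_def using le_iff by blast

lemma int_open: "cv xs x \<Longrightarrow> x \<in> cv_interior cv A \<Longrightarrow> \<forall>\<^sub>F n in sequentially. xs n \<in> cv_interior cv A"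
proof -
  assume a: "cv xs x" "x \<in> cv_interior cv A"
  then obtain U where U: "U \<subseteq> A" "cv_open cv U" "x \<in> U" unfolding cv_interior_def by blast
  then have "\<forall>\<^sub>F n in sequentially. xs n \<in> U" using a unfolding cv_open_def by blast
  then show ?thesis
    by (rule eventually_mono) (use U in \<open>auto simp: cv_interior_def\<close>)
qed

lemma less_open:
  assumes "sv_less cv le 0 c" "cv u 0"
  shows "\<forall>\<^sub>F n in sequentially. sv_less cv le (u n) c"
proof -
  have "cv (\<lambda>n. c + (-1) *\<^sub>R u n) (c + (-1) *\<^sub>R 0)"
    by (rule C1[OF cst C2[OF assms(2)]])
  then have "cv (\<lambda>n. c - u n) c" by simp
  then show ?thesis using int_open assms(1) unfolding sv_less_def by simp
qed

lemma le_less_trans':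
  assumes "le x y" "sv_less cv le y z" shows "sv_less cv le x z"
proof -
  let ?K = "{w. le 0 w}"
  let ?I = "cv_interior cv ?K"
  define a where "a = y - x"
  have a: "le 0 a" using assms(1) le_iff a_def by simp
  define V where "V = (\<lambda>w. w + a) ` ?I"
  have "cv_open cv V" unfolding cv_open_def
  proof (intro allI impI)
    fix xs v assume h: "cv xs v \<and> v \<in> V"
    then obtain u where u: "u \<in> ?I" "v = u + a" unfolding V_def by blast
    have "cv (\<lambda>n. xs n + (-a)) (v + (-a))" using C1[OF _ cst] h by blast
    then have "\<forall>\<^sub>F n in sequentially. xs n + (-a) \<in> ?I" using int_open u by simp
    then show "\<forall>\<^sub>F n in sequentially. xs n \<in> V"
      by (rule eventually_mono) (force simp: V_def image_iff)
  qed
  moreover have "V \<subseteq> ?K"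
  proof
    fix v assume "v \<in> V"
    then obtain u where u: "u \<in> ?I" "v = u + a" unfolding V_def by blast
    then have "le 0 u" unfolding cv_interior_def by blast
    have "le a (u + a)" using Ladd[OF \<open>le 0 u\<close>, of a] by simp
    then show "v \<in> ?K" using Ltrans[OF a] u by simp
  qed
  ultimately have "V \<subseteq> ?I" unfolding cv_interior_def by blast
  moreover have "z - x \<in> V" unfolding V_def a_def using assms(2) unfolding sv_less_def
    by (force simp: image_iff)
  ultimately show ?thesis unfolding sv_less_def by blast
qed

lemma less_scale:
  assumes "t > 0" "sv_less cv le 0 e" shows "sv_less cv le 0 (t *\<^sub>R e)"
proof -
  let ?K = "{w. le 0 w}"
  let ?I = "cv_interior cv ?K"
  define V where "V = (\<lambda>w. t *\<^sub>R w) ` ?I"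
  have "cv_open cv V" unfolding cv_open_def
  proof (intro allI impI)
    fix xs v assume h: "cv xs v \<and> v \<in> V"
    then obtain u where u: "u \<in> ?I" "v = t *\<^sub>R u" unfolding V_def by blast
    have "cv (\<lambda>n. (1/t) *\<^sub>R xs n) ((1/t) *\<^sub>R v)" using C2 h by blast
    then have "\<forall>\<^sub>F n in sequentially. (1/t) *\<^sub>R xs n \<in> ?I" using int_open u assms(1) by simp
    then show "\<forall>\<^sub>F n in sequentially. xs n \<in> V"
    proof (rule eventually_mono)
      fix n assume "(1/t) *\<^sub>R xs n \<in> ?I"
      moreover have "xs n = t *\<^sub>R ((1/t) *\<^sub>R xs n)" using assms(1) by simp
      ultimately show "xs n \<in> V" unfolding V_def by blast
    qed
  qed
  moreover have "V \<subseteq> ?K"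
  proof
    fix v assume "v \<in> V"
    then obtain u where u: "u \<in> ?I" "v = t *\<^sub>R u" unfolding V_def by blast
    then have "le 0 u" unfolding cv_interior_def by blast
    then show "v \<in> ?K" using Lsc[of t 0 u] assms(1) u by simp
  qed
  ultimately have "V \<subseteq> ?I" unfolding cv_interior_def by blast
  moreover have "t *\<^sub>R e \<in> V" unfolding V_def using assms(2) unfolding sv_less_def by auto
  ultimately show ?thesis unfolding sv_less_def by auto
qed

lemma exists_pos: "\<exists>e. sv_less cv le 0 e"
  using S unfolding solid_vector_space_def solid_cone_def sv_less_def by auto

lemma scale_tends: "ls \<longlonglongrightarrow> 0 \<Longrightarrow> cv (\<lambda>k. ls k *\<^sub>R e) 0"
  using C3[of ls 0 e] by simp

lemma nonneg_scale: "t \<ge> 0 \<Longrightarrow> le 0 e \<Longrightarrow> le 0 (t *\<^sub>R e)"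
  using Lsc[of t 0 e] by simp

end

theorem theorem9p22:
  fixes cv :: "(nat \<Rightarrow> 'y::real_vector) \<Rightarrow> 'y \<Rightarrow> bool"
    and le :: "'y \<Rightarrow> 'y \<Rightarrow> bool"
    and d :: "'x \<Rightarrow> 'x \<Rightarrow> 'y"
  assumes "solid_vector_space cv le"
    and "cone_metric le d"
  shows "cm_complete cv le d \<longleftrightarrow>
    (\<forall>(c :: nat \<Rightarrow> 'x) (r :: nat \<Rightarrow> 'y).
        (\<forall>n. le 0 (r n)) \<and>
        (\<forall>n. cm_cball le d (c (Suc n)) (r (Suc n)) \<subseteq> cm_cball le d (c n) (r n)) \<and>
        cv r 0
      \<longrightarrow> (\<Inter>n. cm_cball le d (c n) (r n)) \<noteq> {})"
proof -
  note S = assms(1)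
  have d0: "\<And>x. d x x = 0" and dsym: "\<And>x y. d x y = d y x"
    and tri: "\<And>x y z. le (d x y) (d x z + d z y)" and dpos: "\<And>x y. le 0 (d x y)"
    using assms(2) unfolding cone_metric_def by auto
  show ?thesis
  proof
    assume comp: "cm_complete cv le d"
    show "\<forall>c r. (\<forall>n. le 0 (r n)) \<and>
        (\<forall>n. cm_cball le d (c (Suc n)) (r (Suc n)) \<subseteq> cm_cball le d (c n) (r n)) \<and>
        cv r 0 \<longrightarrow> (\<Inter>n. cm_cball le d (c n) (r n)) \<noteq> {}"
    proof (intro allI impI)
      fix c :: "nat \<Rightarrow> 'x" and r :: "nat \<Rightarrow> 'y"
      assume h: "(\<forall>n. le 0 (r n)) \<and>
        (\<forall>n. cm_cball le d (c (Suc n)) (r (Suc n)) \<subseteq> cm_cball le d (c n) (r n)) \<and> cv r 0"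
      define B where "B n = cm_cball le d (c n) (r n)" for n
      have nest: "B m \<subseteq> B n" if "n \<le> m" for n m
        using that
      proof (induction m rule: dec_induct)
        case base then show ?case by simp
      next
        case (step m) then show ?case using h unfolding B_def by blast
      qed
      have cin: "c m \<in> B m" for m using h d0 unfolding B_def cm_cball_def by simp
      have dc: "le (d (c m) (c n)) (r n)" if "n \<le> m" for n m
        using nest[OF that] cin[of m] unfolding B_def cm_cball_def by blast
      have "cm_Cauchy cv le d c" unfolding cm_Cauchy_def
      proof (intro allI impI)
        fix e assume e: "sv_less cv le 0 e"
        have "\<forall>\<^sub>F n in sequentially. sv_less cv le (r n) e"
          using less_open[OF S e] h by blast
        then obtain N where N: "\<And>n. n \<ge> N \<Longrightarrow> sv_less cv le (r n) e"
          unfolding eventually_sequentially by blast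
        show "\<exists>N. \<forall>n m. N < n \<and> N < m \<longrightarrow> sv_less cv le (d (c n) (c m)) e"
        proof (intro exI allI impI)
          fix n m assume nm: "N < n \<and> N < m"
          show "sv_less cv le (d (c n) (c m)) e"
          proof (cases "n \<le> m")
            case True
            then show ?thesis using le_less_trans'[OF S dc[OF True] N[of n]] nm dsym by simp
          next
            case False
            then show ?thesis using le_less_trans'[OF S dc[of m n] N[of m]] nm by simp
          qed
        qed
      qed
      then obtain x where x: "cm_tendsto cv le d c x" using comp unfolding cm_complete_def by blast
      obtain e0 where e0: "sv_less cv le 0 e0" using exists_pos[OF S] by blast
      have "x \<in> B n" for n
      proof -
        have bd: "le (d x (c n)) (r n + inverse (real (Suc k)) *\<^sub>R e0)" for k
        proof -
          define t where "t = inverse (real (Suc k))"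
          have tp: "sv_less cv le 0 (t *\<^sub>R e0)" using less_scale[OF S _ e0] t_def by simp
          then have "\<forall>\<^sub>F m in sequentially. sv_less cv le (d (c m) x) (t *\<^sub>R e0)"
            using x unfolding cm_tendsto_def by blast
          then obtain M where M: "\<And>m. m \<ge> M \<Longrightarrow> sv_less cv le (d (c m) x) (t *\<^sub>R e0)"
            unfolding eventually_sequentially by blast
          define m where "m = max M n"
          have "le (d (c m) x) (t *\<^sub>R e0)" using int_sub[OF S M] m_def by simp
          then have "le (d x (c m)) (t *\<^sub>R e0)" using dsym by simp
          moreover have "le (d (c m) (c n)) (r n)" using dc m_def by simp
          ultimately have "le (d x (c m) + d (c m) (c n)) (t *\<^sub>R e0 + r n)"
            using add_mono'[OF S] by blast
          then have "le (d x (c n)) (t *\<^sub>R e0 + r n)" using Ltrans[OF S tri] by blast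
          then show ?thesis unfolding t_def by (simp add: add.commute)
        qed
        have c2: "cv (\<lambda>k. r n + inverse (real (Suc k)) *\<^sub>R e0) (r n + 0)"
          by (rule C1[OF S cst[OF S] scale_tends[OF S LIMSEQ_inverse_real_of_nat]])
        have c1: "cv (\<lambda>k. d x (c n)) (d x (c n))" by (rule cst[OF S])
        have "le (d x (c n)) (r n + 0)" by (rule V3[OF S c1 c2]) (use bd in simp)
        then show ?thesis unfolding B_def cm_cball_def by simp
      qed
      then show "(\<Inter>n. cm_cball le d (c n) (r n)) \<noteq> {}" unfolding B_def by blast
    qed
  next
    assume NB: "\<forall>c r. (\<forall>n. le 0 (r n)) \<and>
        (\<forall>n. cm_cball le d (c (Suc n)) (r (Suc n)) \<subseteq> cm_cball le d (c n) (r n)) \<and>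
        cv r 0 \<longrightarrow> (\<Inter>n. cm_cball le d (c n) (r n)) \<noteq> {}"
    show "cm_complete cv le d" unfolding cm_complete_def
    proof (intro allI impI)
      fix s :: "nat \<Rightarrow> 'x" assume cs: "cm_Cauchy cv le d s"
      obtain e where e: "sv_less cv le 0 e" using exists_pos[OF S] by blast
      have e0: "le 0 e" using int_sub[OF S e] .
      define ek where "ek k = ((1/2::real)^k) *\<^sub>R e" for k
      have ekp: "sv_less cv le 0 (ek k)" for k unfolding ek_def by (rule less_scale[OF S _ e]) simp
      have "\<forall>k. \<exists>N. \<forall>n m. N < n \<and> N < m \<longrightarrow> sv_less cv le (d (s n) (s m)) (ek k)"
        using cs ekp unfolding cm_Cauchy_def by blast
      then obtain f where f0: "\<forall>k. \<forall>n m. f k < n \<and> f k < m \<longrightarrow> sv_less cv le (d (s n) (s m)) (ek k)"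
        by (rule choice[THEN exE]) blast
      have f: "\<And>k n m. f k < n \<Longrightarrow> f k < m \<Longrightarrow> sv_less cv le (d (s n) (s m)) (ek k)"
        using f0 by blast
      define N where "N = rec_nat (Suc (f 0)) (\<lambda>k a. Suc (max a (f (Suc k))))"
      have N0: "N 0 = Suc (f 0)" and NS: "N (Suc k) = Suc (max (N k) (f (Suc k)))" for k
        unfolding N_def by simp_all
      have Ngt: "f k < N k" for k by (cases k) (simp_all add: N0 NS)
      have Nm: "N k \<le> N (Suc k)" for k by (simp add: NS)
      define ctr where "ctr k = s (N k)" for k
      define r where "r k = (2 * (1/2::real)^k) *\<^sub>R e" for k
      have rpos: "\<forall>n. le 0 (r n)" unfolding r_def using nonneg_scale[OF S _ e0] by simp
      have rt: "cv r 0" unfolding r_def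
        by (rule scale_tends[OF S]) (intro tendsto_mult_right_zero LIMSEQ_power_zero, simp)
      have nest: "\<forall>n. cm_cball le d (ctr (Suc n)) (r (Suc n)) \<subseteq> cm_cball le d (ctr n) (r n)"
      proof (intro allI subsetI)
        fix k y assume "y \<in> cm_cball le d (ctr (Suc k)) (r (Suc k))"
        then have y: "le (d y (ctr (Suc k))) (r (Suc k))" unfolding cm_cball_def by simp
        have "le (d (ctr (Suc k)) (ctr k)) (ek k)"
          unfolding ctr_def by (rule int_sub[OF S f]) (use Ngt[of k] Nm[of k] in simp_all)
        then have "le (d y (ctr (Suc k)) + d (ctr (Suc k)) (ctr k)) (r (Suc k) + ek k)"
          using add_mono'[OF S y] by blast
        moreover have "r (Suc k) + ek k = r k"
          unfolding r_def ek_def by (simp add: scaleR_add_left[symmetric])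
        ultimately have "le (d y (ctr k)) (r k)" using Ltrans[OF S tri[of y "ctr k" "ctr (Suc k)"]] by simp
        then show "y \<in> cm_cball le d (ctr k) (r k)" unfolding cm_cball_def by simp
      qed
      have "(\<Inter>n. cm_cball le d (ctr n) (r n)) \<noteq> {}"
        using NB[rule_format, of r ctr] rpos rt nest by blast
      then obtain x where x: "\<And>k. x \<in> cm_cball le d (ctr k) (r k)" by blast
      have xk: "le (d (ctr k) x) (r k)" for k using x[of k] dsym unfolding cm_cball_def by simp
      show "\<exists>x. cm_tendsto cv le d s x"
      proof (intro exI)
        show "cm_tendsto cv le d s x" unfolding cm_tendsto_def
        proof (intro allI impI)
          fix c assume c: "sv_less cv le 0 c"
          have "cv (\<lambda>k. (3 * (1/2::real)^k) *\<^sub>R e) 0"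
            by (rule scale_tends[OF S]) (intro tendsto_mult_right_zero LIMSEQ_power_zero, simp)
          then have "\<forall>\<^sub>F k in sequentially. sv_less cv le ((3 * (1/2::real)^k) *\<^sub>R e) c"
            using less_open[OF S c] by blast
          then obtain k where k: "sv_less cv le ((3 * (1/2::real)^k) *\<^sub>R e) c"
            unfolding eventually_sequentially by blast
          show "\<forall>\<^sub>F n in sequentially. sv_less cv le (d (s n) x) c"
            unfolding eventually_sequentially
          proof (intro exI allI impI)
            fix n assume n: "Suc (f k) \<le> n"
            have "le (d (s n) (ctr k)) (ek k)"
              unfolding ctr_def by (rule int_sub[OF S f]) (use Ngt[of k] n in simp_all)
            then have "le (d (s n) (ctr k) + d (ctr k) x) (ek k + r k)"
              using add_mono'[OF S _ xk] by blast
            moreover have "ek k + r k = (3 * (1/2::real)^k) *\<^sub>R e"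
              unfolding r_def ek_def by (simp add: scaleR_add_left[symmetric])
            ultimately have "le (d (s n) x) ((3 * (1/2::real)^k) *\<^sub>R e)"
              using Ltrans[OF S tri[of "s n" x "ctr k"]] by simp
            then show "sv_less cv le (d (s n) x) c" using le_less_trans'[OF S _ k] by blast
          qed
        qed
      qed
    qed
  qed
qed

end
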